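(* For all integers $k \geq 4$ and $n \geq 2k+3$, \[\iota(B'_{n,C(k)}, \{C_{k+1}\}) = \left\lfloor \frac{2n}{2k+3} \right\rfloor.\]
   Context: Graphs are finite and simple; $C_{m}$ denotes the cycle on $m$ vertices. For $D \subseteq V(G)$, $N[D]$ is the union of closed neighbourhoods of vertices of $D$; $D$ is $\{C_{k+1}\}$-isolating if $G - N[D]$ contains no $(k+1)$-cycle as a subgraph, and $\iota(G,\{C_{k+1}\})$ is the minimum size of such a set. Define $\mathrm{mod}^*$ as the usual modulo operation except that $ba \ \mathrm{mod}^*\ a = a$ (instead of $0$). For $r \geq 1$, $r < m$, $C_m^r$ is the graph on $[m]$ with edges $\{i, (i+j) \ \mathrm{mod}^*\ m\}$ for $i \in [m]$, $j \in [r]$. For $k \geq 2$: if $k$ is even, $C(k) = C_{2k+2}^{k/2}$; if $k$ is odd, $C(k)$ has vertex set $[2k+2]$ and edge set $E(C_{2k+2}^{(k-1)/2}) \cup \{\{i, i+\frac{k+1}{2}\} : i \in [\frac{k+1}{2}] \cup ([k+1+\frac{k+1}{2}] \setminus [k+1])\}$. For $n \geq 2k+3$, let $q = \lfloor n/(2k+3) \rfloor$ and $n = q(2k+3)+r$ with $0 \le r \le 2k+2$. Let $u_1,\dots,u_{q+r}$ be new vertices. Let $R$ be the empty graph if $r \le 1$, and if $r \ge 2$ let $R$ have vertex set $\{u_{q+j} : j \in [r]\}$ and edge set $\{u_{q+r}u_{q+j} : j \in [r-1]\}$. Let $G_1,\dots,G_q$ be pairwise disjoint copies of $C(k)$, disjoint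 from the $u$'s, with $v_{i,1},\dots,v_{i,2k+2}$ the vertices of $G_i$ corresponding to $1,\dots,2k+2$. Let $t=\min\{1,r\}$. The graph $B_{n,C(k)}$ has vertex set $\{u_1,\dots,u_{q+r}\} \cup \bigcup_{i=1}^q V(G_i)$ and edge set $\{u_iv_{i,1} : i \in [q]\} \cup \{u_iu_{i+1} : i \in [q+t-1]\} \cup E(R) \cup \bigcup_{i=1}^q E(G_i)$. Finally $B'_{n,C(k)}$ is the graph with the same vertex set as $B_{n,C(k)}$ and edge set $E(B_{n,C(k)}) \cup \binom{V(R)}{2}$ (i.e. $V(R)$ is made into a clique). *)

theory Defs
  imports Main
begin

(* Simple graphs are given by a vertex set V and a set E of 2-element edges {a,b}. *)

definition closed_nbhd :: "'a set set \<Rightarrow> 'a set \<Rightarrow> 'a set" where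
  "closed_nbhd E D = D \<union> {v. \<exists>d\<in>D. {d, v} \<in> E}"

definition has_cycle :: "'a set \<Rightarrow> 'a set set \<Rightarrow> nat \<Rightarrow> bool" where
  "has_cycle V E m \<longleftrightarrow> 3 \<le> m \<and>
     (\<exists>f. inj_on f {..<m} \<and> f ` {..<m} \<subseteq> V \<and> (\<forall>i<m. {f i, f (Suc i mod m)} \<in> E))"

(* D is C_m-isolating in (V,E): G - N[D] (induced subgraph on V - N[D]) has no C_m *)
definition isolating :: "'a set \<Rightarrow> 'a set set \<Rightarrow> 'a set \<Rightarrow> nat \<Rightarrow> bool" where
  "isolating V E D m \<longleftrightarrow> D \<subseteq> V \<and> \<not> has_cycle (V - closed_nbhd E D) E m"

definition iota :: "'a set \<Rightarrow> 'a set set \<Rightarrow> nat \<Rightarrow> nat" where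
  "iota V E m = Min {card D | D. isolating V E D m}"

definition modstar :: "nat \<Rightarrow> nat \<Rightarrow> nat" where
  "modstar x m = (if x mod m = 0 then m else x mod m)"

definition circ_power_edges :: "nat \<Rightarrow> nat \<Rightarrow> nat set set" where
  "circ_power_edges m r = {{i, modstar (i + j) m} | i j. i \<in> {1..m} \<and> j \<in> {1..r}}"

definition Ck_edges :: "nat \<Rightarrow> nat set set" where
  "Ck_edges k = (if even k then circ_power_edges (2*k+2) (k div 2)
     else circ_power_edges (2*k+2) ((k - 1) div 2) \<union>
       {{i, i + (k+1) div 2} | i. i \<in> {1..(k+1) div 2} \<union> ({1..k+1+(k+1) div 2} - {1..k+1})})"

(* vertices: U i = u_i, W i j = v_{i,j} *)
datatype bvert = U nat | W nat nat

definition B_V :: "nat \<Rightarrow> nat \<Rightarrow> bvert set" where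
  "B_V n k = (let q = n div (2*k+3); r = n mod (2*k+3) in
     {U i | i. i \<in> {1..q+r}} \<union> {W i j | i j. i \<in> {1..q} \<and> j \<in> {1..2*k+2}})"

definition R_V :: "nat \<Rightarrow> nat \<Rightarrow> bvert set" where
  "R_V n k = (let q = n div (2*k+3); r = n mod (2*k+3) in
     if 2 \<le> r then {U (q+j) | j. j \<in> {1..r}} else {})"

definition R_E :: "nat \<Rightarrow> nat \<Rightarrow> bvert set set" where
  "R_E n k = (let q = n div (2*k+3); r = n mod (2*k+3) in
     if 2 \<le> r then {{U (q+r), U (q+j)} | j. j \<in> {1..r-1}} else {})"

definition B_E :: "nat \<Rightarrow> nat \<Rightarrow> bvert set set" where
  "B_E n k = (let q = n div (2*k+3); r = n mod (2*k+3); t = min 1 r in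
     {{U i, W i 1} | i. i \<in> {1..q}}
     \<union> {{U i, U (i+1)} | i. i \<in> {1..q+t-1}}
     \<union> R_E n k
     \<union> {{W i a, W i b} | i a b. i \<in> {1..q} \<and> {a, b} \<in> Ck_edges k})"

definition B'_E :: "nat \<Rightarrow> nat \<Rightarrow> bvert set set" where
  "B'_E n k = B_E n k \<union> {{a, b} | a b. a \<in> R_V n k \<and> b \<in> R_V n k \<and> a \<noteq> b}"

end

theory Submission
  imports Defs
begin


lemma modstar_eq:
  assumes "1 \<le> i" "i \<le> m" "1 \<le> d" "d < m"
  shows "modstar (i+d) m = (if i+d \<le> m then i+d else i+d-m)"
proof (cases "i + d < m")
  case True then show ?thesis using assms by (simp add: modstar_def)
next
  case False
  show ?thesis
  proof (cases "i+d = m")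
    case True then show ?thesis by (simp add: modstar_def)
  next
    case F2: False
    have "(i+d) mod m = i+d-m" using assms False F2
    proof -
      have "(i+d) mod m = (i+d-m) mod m" using False by (simp add: le_mod_geq)
      also have "\<dots> = i+d-m" using assms by (intro mod_less) linarith
      finally show ?thesis .
    qed
    then show ?thesis using False F2 assms by (auto simp: modstar_def)
  qed
qed

definition cadj :: "nat \<Rightarrow> nat \<Rightarrow> nat \<Rightarrow> nat \<Rightarrow> bool" where
  "cadj m r a b \<longleftrightarrow> 1 \<le> a \<and> a \<le> m \<and> 1 \<le> b \<and> b \<le> m \<and>
     ((a < b \<and> (b - a \<le> r \<or> a + m - b \<le> r)) \<or> (b < a \<and> (a - b \<le> r \<or> b + m - a \<le> r)))"

lemma circ_mem:
  assumes "1 \<le> r" "r < m"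
  shows "{a,b} \<in> circ_power_edges m r \<longleftrightarrow> cadj m r a b"
proof
  assume "{a,b} \<in> circ_power_edges m r"
  then obtain i d where id: "{a,b} = {i, modstar (i+d) m}" "1 \<le> i" "i \<le> m" "1 \<le> d" "d \<le> r"
  proof -
    have "\<exists>i d. {a,b} = {i, modstar (i+d) m} \<and> i \<in> {1..m} \<and> d \<in> {1..r}"
      using \<open>{a,b} \<in> circ_power_edges m r\<close> unfolding circ_power_edges_def by (simp only: mem_Collect_eq)
    then show ?thesis using that by (simp only: atLeastAtMost_iff) blast
  qed
  have "modstar (i+d) m = (if i+d \<le> m then i+d else i+d-m)"
    using id assms by (intro modstar_eq) auto
  define c where "c = modstar (i+d) m"
  have c: "c = (if i+d \<le> m then i+d else i+d-m)" using c_def \<open>modstar (i+d) m = _\<close> by simp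
  have ci: "cadj m r i c" using c id(2-5) assms unfolding cadj_def by (cases "i+d \<le> m") auto
  have cs: "cadj m r x y \<Longrightarrow> cadj m r y x" for x y unfolding cadj_def by auto
  from id(1) have "(a = i \<and> b = c) \<or> (a = c \<and> b = i)" unfolding c_def by (simp only: doubleton_eq_iff)
  then show "cadj m r a b" using ci cs by blast
next
  assume c: "cadj m r a b"
  have mem: "{a,b} \<in> circ_power_edges m r" if "1 \<le> i" "i \<le> m" "1 \<le> d" "d \<le> r"
     "{a,b} = {i, modstar (i+d) m}" for i d
    unfolding circ_power_edges_def
    apply (simp only: mem_Collect_eq)
    apply (rule exI[of _ i], rule exI[of _ d])
    using that by simp
  have ms: "\<And>i d. 1 \<le> i \<Longrightarrow> i \<le> m \<Longrightarrow> 1 \<le> d \<Longrightarrow> d \<le> r \<Longrightarrow>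
     modstar (i+d) m = (if i+d \<le> m then i+d else i+d-m)"
    using assms by (intro modstar_eq) auto
  have bnd: "1 \<le> a" "a \<le> m" "1 \<le> b" "b \<le> m" using c unfolding cadj_def by auto
  consider "a < b" "b - a \<le> r" | "a < b" "a + m - b \<le> r" | "b < a" "a - b \<le> r" | "b < a" "b + m - a \<le> r"
    using c unfolding cadj_def by auto
  then show "{a,b} \<in> circ_power_edges m r"
  proof cases
    case 1
    have "modstar (a + (b-a)) m = b" using ms[of a "b-a"] 1 bnd by simp
    then show ?thesis using 1 bnd by (intro mem[of a "b-a"]) auto
  next
    case 2
    have "modstar (b + (a+m-b)) m = a" using ms[of b "a+m-b"] 2 bnd by simp
    then show ?thesis using 2 bnd by (intro mem[of b "a+m-b"]) auto
  next
    case 3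
    have "modstar (b + (a-b)) m = a" using ms[of b "a-b"] 3 bnd by simp
    then show ?thesis using 3 bnd by (intro mem[of b "a-b"]) auto
  next
    case 4
    have "modstar (a + (b+m-a)) m = b" using ms[of a "b+m-a"] 4 bnd by simp
    then show ?thesis using 4 bnd by (intro mem[of a "b+m-a"]) auto
  qed
qed

definition xadj :: "nat \<Rightarrow> nat \<Rightarrow> nat \<Rightarrow> bool" where
  "xadj k a b \<longleftrightarrow> (let h = (k+1) div 2 in
     (b = a + h \<and> (1 \<le> a \<and> a \<le> h \<or> k+2 \<le> a \<and> a \<le> k+1+h)) \<or>
     (a = b + h \<and> (1 \<le> b \<and> b \<le> h \<or> k+2 \<le> b \<and> b \<le> k+1+h)))"

lemma Ck_mem:
  assumes "2 \<le> k"
  shows "{a,b} \<in> Ck_edges k \<longleftrightarrow> cadj (2*k+2) (k div 2) a b \<or> (odd k \<and> xadj k a b)"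
proof -
  have c: "{a,b} \<in> circ_power_edges (2*k+2) (k div 2) \<longleftrightarrow> cadj (2*k+2) (k div 2) a b"
    using assms by (intro circ_mem) auto
  have x: "{a,b} \<in> {{i, i + (k+1) div 2} | i. i \<in> {1..(k+1) div 2} \<union> ({1..k+1+(k+1) div 2} - {1..k+1})}
     \<longleftrightarrow> xadj k a b"
  proof -
    define h where "h = (k+1) div 2"
    have "{a,b} \<in> {{i, i + h} | i. i \<in> {1..h} \<union> ({1..k+1+h} - {1..k+1})}
      \<longleftrightarrow> (\<exists>i. {a,b} = {i, i+h} \<and> i \<in> {1..h} \<union> ({1..k+1+h} - {1..k+1}))" by (simp only: mem_Collect_eq)
    also have "\<dots> \<longleftrightarrow> (\<exists>i. ((a = i \<and> b = i+h) \<or> (a = i+h \<and> b = i)) \<and> i \<in> {1..h} \<union> ({1..k+1+h} - {1..k+1}))"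
      by (simp only: doubleton_eq_iff)
    also have "\<dots> \<longleftrightarrow> xadj k a b" unfolding xadj_def Let_def h_def[symmetric] by auto
    finally show ?thesis unfolding h_def .
  qed
  show ?thesis
  proof (cases "even k")
    case True then show ?thesis using c by (simp only: Ck_edges_def if_True simp_thms)
  next
    case False
    then have "(k - 1) div 2 = k div 2" by presburger
    then have "Ck_edges k = circ_power_edges (2*k+2) (k div 2) \<union>
       {{i, i + (k+1) div 2} | i. i \<in> {1..(k+1) div 2} \<union> ({1..k+1+(k+1) div 2} - {1..k+1})}"
      using False unfolding Ck_edges_def by simp
    then show ?thesis using c x False by (simp only: Un_iff simp_thms)
  qed
qed



definition pos :: "nat \<Rightarrow> nat \<Rightarrow> nat \<Rightarrow> nat" where
  "pos m s x = (if s + x \<le> m then s + x else s + x - m)"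

lemma pos_range: "1 \<le> s \<Longrightarrow> s \<le> m \<Longrightarrow> x < m \<Longrightarrow> 1 \<le> pos m s x \<and> pos m s x \<le> m"
  unfolding pos_def by auto

lemma pos_inj: "1 \<le> s \<Longrightarrow> s \<le> m \<Longrightarrow> x < m \<Longrightarrow> y < m \<Longrightarrow> pos m s x = pos m s y \<Longrightarrow> x = y"
  unfolding pos_def by (auto split: if_splits)

lemma pos_adj: "2 \<le> p \<Longrightarrow> 1 \<le> s \<Longrightarrow> s \<le> m \<Longrightarrow> x < m \<Longrightarrow> y < m \<Longrightarrow>
   y = x+1 \<or> y = x+2 \<or> x = y+1 \<or> x = y+2 \<Longrightarrow> 4 < m \<Longrightarrow> cadj m p (pos m s x) (pos m s y)"
  unfolding pos_def cadj_def by (auto split: if_splits)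



definition ordc :: "nat \<Rightarrow> nat \<Rightarrow> nat" where
  "ordc k t = (if t < k div 2 + 1 then 2*t else 2*k+1-2*t)"

lemma e_facts: "2 * ((k::nat) div 2 + 1) = k+2 \<or> 2 * (k div 2 + 1) = k+1"
  by presburger

lemma par: "(2::nat)*a \<noteq> 2*b - 1 \<or> b = 0"
  by presburger

lemma par2: "(2::nat)*a \<noteq> 2*k+1-2*b \<or> 2*k+1 < 2*b"
  by presburger

lemma ordc_le: "t < k+1 \<Longrightarrow> ordc k t \<le> k"
  unfolding ordc_def using e_facts[of k] by auto

lemma ordc_inj: "t < k+1 \<Longrightarrow> t' < k+1 \<Longrightarrow> ordc k t = ordc k t' \<Longrightarrow> t = t'"
  unfolding ordc_def using e_facts[of k] par[of t "k+1-t'"] par[of t' "k+1-t"] par2[of t t' k] par2[of t' t k]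
  by (auto split: if_splits)

lemma ordc_step: "t < k+1 \<Longrightarrow> 2 \<le> k \<Longrightarrow> u = ordc k t \<Longrightarrow> v = ordc k (if t < k then Suc t else 0) \<Longrightarrow>
   v = u+1 \<or> v = u+2 \<or> u = v+1 \<or> u = v+2"
  unfolding ordc_def using e_facts[of k] by (auto split: if_splits)



lemma even_case:
  assumes "2 \<le> p" "m = 4*p+2" "1 \<le> j" "j \<le> m" "x \<le> 2*p" "s = pos m j (p+1)" "y = pos m s x"
  shows "y \<noteq> j \<and> \<not> cadj m p j y"
  using assms unfolding pos_def cadj_def by (auto split: if_splits)



lemma odd_case:
  assumes "2 \<le> p" "m = 4*p+4" "k = 2*p+1" "1 \<le> j" "j \<le> m" "x \<le> k"
    "s = (if j \<le> p+1 \<or> (k+2 \<le> j \<and> j \<le> k+2+p) then pos m j (p+2) else pos m j (p+1))" "y = pos m s x"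
  shows "y \<noteq> j \<and> \<not> cadj m p j y \<and> \<not> xadj k j y"
proof -
  have h: "(k+1) div 2 = p+1" using assms by simp
  show ?thesis using assms unfolding pos_def cadj_def xadj_def Let_def h by (auto split: if_splits)
qed


lemma cyc_exists:
  assumes k4: "4 \<le> k" and j: "1 \<le> j" "j \<le> 2*k+2"
  shows "\<exists>g. inj_on g {..<k+1} \<and> g ` {..<k+1} \<subseteq> {1..2*k+2} \<and>
    (\<forall>t<k+1. {g t, g (Suc t mod (k+1))} \<in> Ck_edges k) \<and>
    (\<forall>t<k+1. g t \<noteq> j \<and> {j, g t} \<notin> Ck_edges k)"
proof -
  define m where "m = 2*k+2"
  define p where "p = k div 2"
  have p2: "2 \<le> p" using k4 unfolding p_def by simp
  define s where "s = (if odd k \<and> (j \<le> p+1 \<or> (k+2 \<le> j \<and> j \<le> k+2+p)) then pos m j (p+2) else pos m j (p+1))"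
  have s: "1 \<le> s" "s \<le> m"
    using pos_range[of j m "p+2"] pos_range[of j m "p+1"] j k4 unfolding s_def m_def p_def by auto
  define g where "g t = pos m s (ordc k t)" for t
  have nonadj: "pos m s x \<noteq> j \<and> {j, pos m s x} \<notin> Ck_edges k" if x: "x \<le> k" for x
  proof (cases "even k")
    case True
    then have kp: "k = 2*p" unfolding p_def by simp
    have "pos m s x \<noteq> j \<and> \<not> cadj m p j (pos m s x)"
      using True by (intro even_case[OF p2 _ j(1) _ _ _ refl]) (use kp x j in \<open>auto simp: m_def s_def\<close>)
    then show ?thesis using Ck_mem[of k j "pos m s x"] k4 True unfolding m_def p_def by auto
  next
    case False
    then have kp: "k = 2*p+1" unfolding p_def by presburger
    have "pos m s x \<noteq> j \<and> \<not> cadj m p j (pos m s x) \<and> \<not> xadj k j (pos m s x)"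
      by (intro odd_case[OF p2 _ kp j(1) _ x _ refl]) (use kp False j in \<open>auto simp: m_def s_def\<close>)
    then show ?thesis using Ck_mem[of k j "pos m s x"] k4 unfolding m_def p_def by auto
  qed
  have "inj_on g {..<k+1}"
  proof (rule inj_onI)
    fix a b assume "a \<in> {..<k+1}" "b \<in> {..<k+1}" "g a = g b"
    then show "a = b" using ordc_inj[of a k b] pos_inj[OF s, of "ordc k a" "ordc k b"] ordc_le[of a k] ordc_le[of b k]
      unfolding g_def m_def by auto
  qed
  moreover have "g ` {..<k+1} \<subseteq> {1..2*k+2}"
  proof
    fix y assume "y \<in> g ` {..<k+1}"
    then obtain t where t: "t < k+1" "y = g t" by auto
    have "ordc k t < m" using ordc_le[OF t(1)] unfolding m_def by simp
    then show "y \<in> {1..2*k+2}" using pos_range[OF s, of "ordc k t"] t unfolding g_def m_def by simp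
  qed
  moreover have "\<forall>t<k+1. {g t, g (Suc t mod (k+1))} \<in> Ck_edges k"
  proof (intro allI impI)
    fix t assume t: "t < k+1"
    have "t < k \<or> t = k" using t by auto
    then have sm: "Suc t mod (k+1) = (if t < k then Suc t else 0)" by auto
    define u where "u = ordc k t"
    define v where "v = ordc k (if t < k then Suc t else 0)"
    have uv: "v = u+1 \<or> v = u+2 \<or> u = v+1 \<or> u = v+2"
      using ordc_step[OF t _ u_def v_def] k4 by auto
    have "u \<le> k" "v \<le> k" using ordc_le[OF t] ordc_le[of "if t < k then Suc t else 0" k] t
      unfolding u_def v_def by auto
    then have "cadj m p (pos m s u) (pos m s v)"
      using pos_adj[OF p2 s, of u v] uv k4 unfolding m_def by auto
    then show "{g t, g (Suc t mod (k+1))} \<in> Ck_edges k"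
      using Ck_mem[of k "pos m s u" "pos m s v"] k4 sm unfolding g_def u_def v_def m_def p_def by auto
  qed
  moreover have "\<forall>t<k+1. g t \<noteq> j \<and> {j, g t} \<notin> Ck_edges k"
    using nonadj ordc_le unfolding g_def by auto
  ultimately show ?thesis by blast
qed


lemma RV_char:
  assumes "q = n div (2*k+3)" "r = n mod (2*k+3)"
  shows "x \<in> R_V n k \<longleftrightarrow> 2 \<le> r \<and> (\<exists>j. x = U (q+j) \<and> 1 \<le> j \<and> j \<le> r)"
  unfolding R_V_def Let_def assms[symmetric] by auto

lemma BV_U: "U i \<in> B_V n k \<longleftrightarrow> 1 \<le> i \<and> i \<le> n div (2*k+3) + n mod (2*k+3)"
  unfolding B_V_def Let_def by auto

lemma BV_W: "W i j \<in> B_V n k \<longleftrightarrow> 1 \<le> i \<and> i \<le> n div (2*k+3) \<and> 1 \<le> j \<and> j \<le> 2*k+2"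
  unfolding B_V_def Let_def by auto

lemma BE_char:
  assumes "q = n div (2*k+3)" "r = n mod (2*k+3)" "t = min 1 r"
  shows "e \<in> B'_E n k \<longleftrightarrow>
    (\<exists>i. e = {U i, W i 1} \<and> 1 \<le> i \<and> i \<le> q) \<or>
    (\<exists>i. e = {U i, U (i+1)} \<and> 1 \<le> i \<and> i \<le> q+t-1) \<or>
    (2 \<le> r \<and> (\<exists>j. e = {U (q+r), U (q+j)} \<and> 1 \<le> j \<and> j \<le> r-1)) \<or>
    (\<exists>i a b. e = {W i a, W i b} \<and> 1 \<le> i \<and> i \<le> q \<and> {a,b} \<in> Ck_edges k) \<or>
    (\<exists>a b. e = {a,b} \<and> a \<in> R_V n k \<and> b \<in> R_V n k \<and> a \<noteq> b)"
proof -
  have RE: "e \<in> R_E n k \<longleftrightarrow> (2 \<le> r \<and> (\<exists>j. e = {U (q+r), U (q+j)} \<and> 1 \<le> j \<and> j \<le> r-1))"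
    unfolding R_E_def Let_def assms(1,2)[symmetric]
    by (cases "2 \<le> r") (simp_all only: if_True if_False mem_Collect_eq atLeastAtMost_iff empty_iff simp_thms)
  show ?thesis
    unfolding B'_E_def B_E_def Let_def assms(1,2)[symmetric] assms(3)[symmetric]
    by (simp only: Un_iff RE mem_Collect_eq atLeastAtMost_iff conj_assoc disj_assoc)
qed

lemma Ck_sym: "{a,b} \<in> Ck_edges k \<Longrightarrow> {b,a} \<in> Ck_edges k"
  by (simp add: insert_commute)

lemma E1:
  assumes "{d, W i x} \<in> B'_E n k"
  shows "(d = U i \<and> x = 1) \<or> (\<exists>y. d = W i y \<and> {y,x} \<in> Ck_edges k)"
proof -
  define q where "q = n div (2*k+3)"
  define r where "r = n mod (2*k+3)"
  define t where "t = min 1 r"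
  from assms have "(\<exists>i'. {d, W i x} = {U i', W i' 1} \<and> 1 \<le> i' \<and> i' \<le> q) \<or>
    (\<exists>i'. {d, W i x} = {U i', U (i'+1)} \<and> 1 \<le> i' \<and> i' \<le> q+t-1) \<or>
    (2 \<le> r \<and> (\<exists>j. {d, W i x} = {U (q+r), U (q+j)} \<and> 1 \<le> j \<and> j \<le> r-1)) \<or>
    (\<exists>i' a b. {d, W i x} = {W i' a, W i' b} \<and> 1 \<le> i' \<and> i' \<le> q \<and> {a,b} \<in> Ck_edges k) \<or>
    (\<exists>a b. {d, W i x} = {a,b} \<and> a \<in> R_V n k \<and> b \<in> R_V n k \<and> a \<noteq> b)"
    unfolding BE_char[OF q_def r_def t_def] .
  then show ?thesis
  proof (elim disjE exE conjE)
    fix i' assume "{d, W i x} = {U i', W i' 1}" then show ?thesis by (simp add: doubleton_eq_iff)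
  next
    fix i' assume "{d, W i x} = {U i', U (i'+1)}" then show ?thesis by (simp add: doubleton_eq_iff)
  next
    fix j assume "{d, W i x} = {U (q+r), U (q+j)}" then show ?thesis by (simp add: doubleton_eq_iff)
  next
    fix i' a b assume "{d, W i x} = {W i' a, W i' b}" "{a,b} \<in> Ck_edges k"
    then show ?thesis using Ck_sym[of a b k] by (auto simp add: doubleton_eq_iff)
  next
    fix a b assume "{d, W i x} = {a,b}" "a \<in> R_V n k" "b \<in> R_V n k"
    then show ?thesis by (auto simp add: doubleton_eq_iff RV_char[OF q_def r_def])
  qed
qed

lemma E2:
  assumes "1 \<le> i" "i \<le> n div (2*k+3)" "{a,b} \<in> Ck_edges k"
  shows "{W i a, W i b} \<in> B'_E n k"
  using assms BE_char[OF refl refl refl, of "{W i a, W i b}" n k] by blast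

lemma E3:
  assumes "a \<in> R_V n k" "b \<in> R_V n k" "a \<noteq> b"
  shows "{a, b} \<in> B'_E n k"
  using assms BE_char[OF refl refl refl, of "{a, b}" n k] by blast

lemma E4:
  assumes "1 \<le> i" "i \<le> n div (2*k+3)"
  shows "{U i, W i 1} \<in> B'_E n k"
  using assms BE_char[OF refl refl refl, of "{U i, W i 1}" n k] by blast

lemma E5:
  assumes "1 \<le> n div (2*k+3)" "1 \<le> n mod (2*k+3)"
  shows "{U (n div (2*k+3)), U (n div (2*k+3) + 1)} \<in> B'_E n k"
proof -
  have "min 1 (n mod (2*k+3)) = 1" using assms(2) by simp
  show ?thesis
  proof -
    have "\<exists>i. {U (n div (2*k+3)), U (n div (2*k+3) + 1)} = {U i, U (i+1)} \<and> 1 \<le> i \<and> i \<le> n div (2*k+3) + min 1 (n mod (2*k+3)) - 1"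
      using assms \<open>min 1 (n mod (2*k+3)) = 1\<close> by (intro exI[of _ "n div (2*k+3)"]) simp
    then show ?thesis using BE_char[OF refl refl refl, of "{U (n div (2*k+3)), U (n div (2*k+3) + 1)}" n k] by blast
  qed
qed

lemma E6:
  assumes "2 \<le> n mod (2*k+3)" "1 \<le> j" "j \<le> n mod (2*k+3) - 1"
  shows "{U (n div (2*k+3) + n mod (2*k+3)), U (n div (2*k+3) + j)} \<in> B'_E n k"
  using assms BE_char[OF refl refl refl, of "{U (n div (2*k+3) + n mod (2*k+3)), U (n div (2*k+3) + j)}" n k]
  by blast

lemma E7:
  assumes "{x,y} \<in> B'_E n k"
  shows "(\<exists>i a b. x = W i a \<and> y = W i b) \<or> (\<exists>i a. x = U i \<and> y = W i a \<and> 1 \<le> i \<and> i \<le> n div (2*k+3)) \<or>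
     (\<exists>i a. x = W i a \<and> y = U i \<and> 1 \<le> i \<and> i \<le> n div (2*k+3)) \<or> (\<exists>a b. x = U a \<and> y = U b)"
proof -
  define q where "q = n div (2*k+3)"
  define r where "r = n mod (2*k+3)"
  define t where "t = min 1 r"
  from assms have "(\<exists>i'. {x,y} = {U i', W i' 1} \<and> 1 \<le> i' \<and> i' \<le> q) \<or>
    (\<exists>i'. {x,y} = {U i', U (i'+1)} \<and> 1 \<le> i' \<and> i' \<le> q+t-1) \<or>
    (2 \<le> r \<and> (\<exists>j. {x,y} = {U (q+r), U (q+j)} \<and> 1 \<le> j \<and> j \<le> r-1)) \<or>
    (\<exists>i' a b. {x,y} = {W i' a, W i' b} \<and> 1 \<le> i' \<and> i' \<le> q \<and> {a,b} \<in> Ck_edges k) \<or>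
    (\<exists>a b. {x,y} = {a,b} \<and> a \<in> R_V n k \<and> b \<in> R_V n k \<and> a \<noteq> b)"
    unfolding BE_char[OF q_def r_def t_def] .
  then show ?thesis
  proof (elim disjE exE conjE)
    fix i' assume "{x,y} = {U i', W i' 1}" "1 \<le> i'" "i' \<le> q"
    then show ?thesis unfolding q_def by (auto simp add: doubleton_eq_iff)
  next
    fix i' assume "{x,y} = {U i', U (i'+1)}" then show ?thesis by (auto simp add: doubleton_eq_iff)
  next
    fix j assume "{x,y} = {U (q+r), U (q+j)}" then show ?thesis by (auto simp add: doubleton_eq_iff)
  next
    fix i' a b assume "{x,y} = {W i' a, W i' b}"
    then show ?thesis by (auto simp add: doubleton_eq_iff)
  next
    fix a b assume "{x,y} = {a,b}" "a \<in> R_V n k" "b \<in> R_V n k"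
    then show ?thesis by (auto simp add: doubleton_eq_iff RV_char[OF q_def r_def])
  qed
qed

lemma E8:
  assumes "{d, U (n div (2*k+3) + j)} \<in> B'_E n k" "2 \<le> j"
  shows "d \<in> R_V n k"
proof -
  define q where "q = n div (2*k+3)"
  define r where "r = n mod (2*k+3)"
  define t where "t = min 1 r"
  have t1: "t \<le> 1" unfolding t_def by simp
  from assms(1) have "(\<exists>i'. {d, U (q+j)} = {U i', W i' 1} \<and> 1 \<le> i' \<and> i' \<le> q) \<or>
    (\<exists>i'. {d, U (q+j)} = {U i', U (i'+1)} \<and> 1 \<le> i' \<and> i' \<le> q+t-1) \<or>
    (2 \<le> r \<and> (\<exists>j'. {d, U (q+j)} = {U (q+r), U (q+j')} \<and> 1 \<le> j' \<and> j' \<le> r-1)) \<or>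
    (\<exists>i' a b. {d, U (q+j)} = {W i' a, W i' b} \<and> 1 \<le> i' \<and> i' \<le> q \<and> {a,b} \<in> Ck_edges k) \<or>
    (\<exists>a b. {d, U (q+j)} = {a,b} \<and> a \<in> R_V n k \<and> b \<in> R_V n k \<and> a \<noteq> b)"
    unfolding BE_char[OF q_def r_def t_def] q_def .
  then show ?thesis
  proof (elim disjE exE conjE)
    fix i' assume "{d, U (q+j)} = {U i', W i' 1}" "i' \<le> q"
    then show ?thesis using assms(2) by (auto simp add: doubleton_eq_iff)
  next
    fix i' assume "{d, U (q+j)} = {U i', U (i'+1)}" "i' \<le> q+t-1"
    then show ?thesis using assms(2) t1 by (auto simp add: doubleton_eq_iff)
  next
    fix j' assume "{d, U (q+j)} = {U (q+r), U (q+j')}" "2 \<le> r" "1 \<le> j'" "j' \<le> r-1"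
    then show ?thesis unfolding RV_char[OF q_def r_def] by (auto simp add: doubleton_eq_iff)
  next
    fix i' a b assume "{d, U (q+j)} = {W i' a, W i' b}"
    then show ?thesis by (auto simp add: doubleton_eq_iff)
  next
    fix a b assume "{d, U (q+j)} = {a,b}" "a \<in> R_V n k" "b \<in> R_V n k"
    then show ?thesis by (auto simp add: doubleton_eq_iff)
  qed
qed


lemma BV_finite: "finite (B_V n k)"
proof -
  have "B_V n k \<subseteq> U ` {1..n div (2*k+3) + n mod (2*k+3)} \<union> (\<lambda>p. W (fst p) (snd p)) ` ({1..n div (2*k+3)} \<times> {1..2*k+2})"
  proof
    fix x assume x: "x \<in> B_V n k"
    show "x \<in> U ` {1..n div (2*k+3) + n mod (2*k+3)} \<union> (\<lambda>p. W (fst p) (snd p)) ` ({1..n div (2*k+3)} \<times> {1..2*k+2})"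
    proof (cases x)
      case (U i) then show ?thesis using x BV_U by auto
    next
      case (W i j)
      then have "(i,j) \<in> {1..n div (2*k+3)} \<times> {1..2*k+2}" using x BV_W by auto
      then show ?thesis using W by force
    qed
  qed
  then show ?thesis by (rule finite_subset) auto
qed

lemma has_cycleI:
  assumes "3 \<le> m" "inj_on f {..<m}" "\<And>t. t < m \<Longrightarrow> f t \<in> V" "\<And>t. t < m \<Longrightarrow> {f t, f (Suc t mod m)} \<in> E"
  shows "has_cycle V E m"
  unfolding has_cycle_def using assms by blast

lemma nbhdI: "d \<in> D \<Longrightarrow> {d, v} \<in> E \<Longrightarrow> v \<in> closed_nbhd E D"
  unfolding closed_nbhd_def by blast

lemma nbhdI2: "v \<in> D \<Longrightarrow> v \<in> closed_nbhd E D"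
  unfolding closed_nbhd_def by blast

lemma nbhdE: "v \<in> closed_nbhd E D \<Longrightarrow> (v \<in> D \<Longrightarrow> P) \<Longrightarrow> (\<And>d. d \<in> D \<Longrightarrow> {d, v} \<in> E \<Longrightarrow> P) \<Longrightarrow> P"
  unfolding closed_nbhd_def by blast

lemma copy_two:
  assumes k4: "4 \<le> k" and DV: "D \<subseteq> B_V n k"
    and nocyc: "\<not> has_cycle (B_V n k - closed_nbhd (B'_E n k) D) (B'_E n k) (k+1)"
    and i: "1 \<le> i" "i \<le> n div (2*k+3)"
  shows "2 \<le> card (D \<inter> {x. x = U i \<or> (\<exists>j. x = W i j)})"
proof (rule ccontr)
  define A where "A = D \<inter> {x. x = U i \<or> (\<exists>j. x = W i j)}"
  define V where "V = B_V n k"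
  define E where "E = B'_E n k"
  assume "\<not> 2 \<le> card (D \<inter> {x. x = U i \<or> (\<exists>j. x = W i j)})"
  then have "card A \<le> Suc 0" unfolding A_def by simp
  moreover have "finite A" unfolding A_def using DV BV_finite finite_subset by blast
  ultimately have one: "\<And>a b. a \<in> A \<Longrightarrow> b \<in> A \<Longrightarrow> a = b" using card_le_Suc0_iff_eq by blast
  obtain j0 where j0: "1 \<le> j0" "j0 \<le> 2*k+2"
    and dom: "\<And>x. W i x \<in> closed_nbhd E D \<Longrightarrow> x = j0 \<or> {j0, x} \<in> Ck_edges k"
  proof (cases "\<exists>y. W i y \<in> D")
    case True
    then obtain y where y: "W i y \<in> D" by blast
    then have yA: "W i y \<in> A" unfolding A_def by blast
    have yr: "1 \<le> y" "y \<le> 2*k+2" using y DV BV_W by auto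
    show ?thesis
    proof (rule that[OF yr])
      fix x assume "W i x \<in> closed_nbhd E D"
      then show "x = y \<or> {y, x} \<in> Ck_edges k"
      proof (rule nbhdE)
        assume "W i x \<in> D"
        then have "W i x \<in> A" unfolding A_def by blast
        then show ?thesis using one[OF yA] by auto
      next
        fix d assume d: "d \<in> D" "{d, W i x} \<in> E"
        from E1[OF d(2)[unfolded E_def]] show ?thesis
        proof
          assume "d = U i \<and> x = 1"
          then have "U i \<in> A" using d unfolding A_def by blast
          then show ?thesis using one[OF yA] by auto
        next
          assume "\<exists>y'. d = W i y' \<and> {y', x} \<in> Ck_edges k"
          then obtain y' where y': "d = W i y'" "{y', x} \<in> Ck_edges k" by blast
          then have "W i y' \<in> A" using d unfolding A_def by blast
          then show ?thesis using one[OF yA] y' by auto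
        qed
      qed
    qed
  next
    case False
    show ?thesis
    proof (rule that[of 1])
      fix x assume "W i x \<in> closed_nbhd E D"
      then show "x = 1 \<or> {1, x} \<in> Ck_edges k"
      proof (rule nbhdE)
        assume "W i x \<in> D" then show ?thesis using False by blast
      next
        fix d assume d: "d \<in> D" "{d, W i x} \<in> E"
        from E1[OF d(2)[unfolded E_def]] show ?thesis using False d(1) by blast
      qed
    qed simp_all
  qed
  obtain g where g: "inj_on g {..<k+1}" "g ` {..<k+1} \<subseteq> {1..2*k+2}"
    "\<forall>t<k+1. {g t, g (Suc t mod (k+1))} \<in> Ck_edges k"
    "\<forall>t<k+1. g t \<noteq> j0 \<and> {j0, g t} \<notin> Ck_edges k"
    using cyc_exists[OF k4 j0] by blast
  have "has_cycle (V - closed_nbhd E D) E (k+1)"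
  proof (rule has_cycleI[where f = "\<lambda>t. W i (g t)"])
    show "3 \<le> k+1" using k4 by simp
    show "inj_on (\<lambda>t. W i (g t)) {..<k+1}" using g(1) unfolding inj_on_def by auto
  next
    fix t assume t: "t < k+1"
    have "g t \<in> {1..2*k+2}" using g(2) t by blast
    then have "W i (g t) \<in> V" unfolding V_def using BV_W i by auto
    moreover have "W i (g t) \<notin> closed_nbhd E D" using dom g(4) t by blast
    ultimately show "W i (g t) \<in> V - closed_nbhd E D" by blast
    show "{W i (g t), W i (g (Suc t mod (k+1)))} \<in> E"
      unfolding E_def using E2[OF i] g(3) t by blast
  qed
  then show False using nocyc unfolding V_def E_def by blast
qed


lemma R_hit:
  assumes k4: "4 \<le> k" and DV: "D \<subseteq> B_V n k"
    and nocyc: "\<not> has_cycle (B_V n k - closed_nbhd (B'_E n k) D) (B'_E n k) (k+1)"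
    and r: "k+2 \<le> n mod (2*k+3)"
  shows "D \<inter> R_V n k \<noteq> {}"
proof
  assume empty: "D \<inter> R_V n k = {}"
  define q where "q = n div (2*k+3)"
  define r where "r = n mod (2*k+3)"
  have inR: "U (q + (2+t)) \<in> R_V n k" if "t < k+1" for t
    unfolding RV_char[OF q_def r_def] using that r unfolding r_def by auto
  have "has_cycle (B_V n k - closed_nbhd (B'_E n k) D) (B'_E n k) (k+1)"
  proof (rule has_cycleI[where f = "\<lambda>t. U (q + (2+t))"])
    show "3 \<le> k+1" using k4 by simp
    show "inj_on (\<lambda>t. U (q + (2+t))) {..<k+1}" unfolding inj_on_def by auto
  next
    fix t assume t: "t < k+1"
    have "U (q + (2+t)) \<in> B_V n k" unfolding BV_U q_def using t r by auto
    moreover have "U (q + (2+t)) \<notin> closed_nbhd (B'_E n k) D"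
    proof
      assume "U (q + (2+t)) \<in> closed_nbhd (B'_E n k) D"
      then show False
      proof (rule nbhdE)
        assume "U (q + (2+t)) \<in> D" then show False using empty inR[OF t] by blast
      next
        fix d assume d: "d \<in> D" "{d, U (q + (2+t))} \<in> B'_E n k"
        have "d \<in> R_V n k" using E8[of d n k "2+t"] d(2) unfolding q_def by simp
        then show False using empty d(1) by blast
      qed
    qed
    ultimately show "U (q + (2+t)) \<in> B_V n k - closed_nbhd (B'_E n k) D" by blast
    have "Suc t mod (k+1) < k+1" by simp
    moreover have "Suc t mod (k+1) \<noteq> t"
    proof
      assume "Suc t mod (k+1) = t"
      moreover have "t < k \<or> t = k" using t by auto
      ultimately show False using k4 by auto
    qed
    ultimately show "{U (q + (2+t)), U (q + (2 + Suc t mod (k+1)))} \<in> B'_E n k"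
      using E3[OF inR[OF t] inR] by auto
  qed
  then show False using nocyc by blast
qed

lemma lower:
  assumes k4: "4 \<le> k" and iso: "isolating (B_V n k) (B'_E n k) D (k+1)"
  shows "2 * (n div (2*k+3)) + (if k+2 \<le> n mod (2*k+3) then 1 else 0) \<le> card D"
proof -
  define q where "q = n div (2*k+3)"
  define r where "r = n mod (2*k+3)"
  define A where "A i = D \<inter> {x. x = U i \<or> (\<exists>j. x = W i j)}" for i
  have DV: "D \<subseteq> B_V n k" and nocyc: "\<not> has_cycle (B_V n k - closed_nbhd (B'_E n k) D) (B'_E n k) (k+1)"
    using iso unfolding isolating_def by auto
  have finD: "finite D" using DV BV_finite finite_subset by blast
  have two: "2 \<le> card (A i)" if "i \<in> {1..q}" for i
    unfolding A_def using copy_two[OF k4 DV nocyc] that unfolding q_def by auto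
  have cardB: "card (\<Union>(A ` {1..q})) = (\<Sum>i\<in>{1..q}. card (A i))"
    by (rule card_UN_disjoint) (use finD in \<open>auto simp: A_def\<close>)
  have "of_nat (card {1..q}) * 2 \<le> (\<Sum>i\<in>{1..q}. card (A i))"
    by (rule sum_bounded_below) (use two in auto)
  then have B2: "2*q \<le> card (\<Union>(A ` {1..q}))" using cardB by simp
  define R' where "R' = D \<inter> R_V n k"
  have RVd: "\<exists>j. x = U (q+j) \<and> 1 \<le> j" if "x \<in> R_V n k" for x
    using that unfolding RV_char[OF q_def r_def] by auto
  have disj: "\<Union>(A ` {1..q}) \<inter> R' = {}"
    unfolding A_def R'_def by (auto dest!: RVd)
  have finB: "finite (\<Union>(A ` {1..q}))" using finD unfolding A_def by auto
  have finR: "finite R'" using finD unfolding R'_def by auto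
  have R1: "(if k+2 \<le> r then 1 else 0) \<le> card R'"
  proof (cases "k+2 \<le> r")
    case True
    then have "R' \<noteq> {}" using R_hit[OF k4 DV nocyc] unfolding R'_def r_def by blast
    then show ?thesis using finR True by (simp add: Suc_le_eq card_gt_0_iff)
  qed simp
  have "card (\<Union>(A ` {1..q}) \<union> R') = card (\<Union>(A ` {1..q})) + card R'"
    using card_Un_disjoint[OF finB finR disj] .
  moreover have "card (\<Union>(A ` {1..q}) \<union> R') \<le> card D"
    by (rule card_mono[OF finD]) (auto simp: A_def R'_def)
  ultimately show ?thesis using B2 R1 unfolding q_def r_def by linarith
qed


definition lab :: "bvert \<Rightarrow> nat" where
  "lab x = (case x of U _ \<Rightarrow> 0 | W i _ \<Rightarrow> Suc i)"

lemma upper: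
  assumes k4: "4 \<le> k" and n: "2*k+3 \<le> n"
  shows "\<exists>D. isolating (B_V n k) (B'_E n k) D (k+1) \<and>
     card D = 2 * (n div (2*k+3)) + (if k+2 \<le> n mod (2*k+3) then 1 else 0)"
proof -
  define q where "q = n div (2*k+3)"
  define r where "r = n mod (2*k+3)"
  define V where "V = B_V n k"
  define E where "E = B'_E n k"
  define p where "p = k div 2"
  have q1: "1 \<le> q" unfolding q_def using n le_div_geq[of "2*k+3" n] by simp
  define X where "X = (if k+2 \<le> r then {U (q+r)} else {})"
  define D0 where "D0 = U ` {1..q} \<union> (\<lambda>i. W i (k+2)) ` {1..q} \<union> X"
  have inU: "U i \<in> D0" if "1 \<le> i" "i \<le> q" for i unfolding D0_def using that by auto
  have inW: "W i (k+2) \<in> D0" if "1 \<le> i" "i \<le> q" for i unfolding D0_def using that by auto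
  have DV: "D0 \<subseteq> V"
  proof
    fix x assume "x \<in> D0"
    then consider i where "x = U i" "1 \<le> i" "i \<le> q" | i where "x = W i (k+2)" "1 \<le> i" "i \<le> q" | "x = U (q+r)" "k+2 \<le> r"
      unfolding D0_def X_def by (auto split: if_splits)
    then show "x \<in> V"
    proof cases
      case 1 then show ?thesis unfolding V_def using BV_U[of i n k] unfolding q_def by auto
    next
      case 2 then show ?thesis unfolding V_def using BV_W[of i "k+2" n k] unfolding q_def by auto
    next
      case 3 then show ?thesis using q1 BV_U[of "q+r" n k] unfolding V_def q_def r_def by auto
    qed
  qed
  have cardD: "card D0 = 2*q + (if k+2 \<le> r then 1 else 0)"
  proof -
    have c1: "card (U ` {1..q}) = q" by (simp add: card_image inj_on_def)
    have c2: "card ((\<lambda>i. W i (k+2)) ` {1..q}) = q" by (simp add: card_image inj_on_def)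
    have c3: "card X = (if k+2 \<le> r then 1 else 0)" unfolding X_def by simp
    have d1: "U ` {1..q} \<inter> (\<lambda>i. W i (k+2)) ` {1..q} = {}" by auto
    have d2: "(U ` {1..q} \<union> (\<lambda>i. W i (k+2)) ` {1..q}) \<inter> X = {}" unfolding X_def by auto
    have "card (U ` {1..q} \<union> (\<lambda>i. W i (k+2)) ` {1..q}) = 2*q"
      using card_Un_disjoint[OF _ _ d1] c1 c2 by simp
    then show ?thesis unfolding D0_def using card_Un_disjoint[OF _ _ d2] c3 unfolding X_def by simp
  qed
  define Rem where "Rem = V - closed_nbhd E D0"
  have R1: "q+2 \<le> a \<and> a \<le> q+r \<and> r \<le> k+1" if a: "U a \<in> Rem" for a
  proof -
    have aV: "1 \<le> a" "a \<le> q+r" using a BV_U[of a n k] unfolding Rem_def V_def q_def r_def by auto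
    have aN: "U a \<notin> closed_nbhd E D0" using a unfolding Rem_def by blast
    have "\<not> a \<le> q" using inU[OF aV(1)] nbhdI2[of "U a" D0 E] aN by blast
    moreover have "a \<noteq> q+1"
    proof
      assume a1: "a = q+1"
      then have "1 \<le> r" using aV by simp
      then have "{U q, U (q+1)} \<in> E" using E5[of n k] q1 unfolding E_def q_def r_def by simp
      then show False using nbhdI[OF inU[OF q1 le_refl]] aN a1 by blast
    qed
    moreover have "r \<le> k+1"
    proof (rule ccontr)
      assume "\<not> r \<le> k+1"
      then have r2: "k+2 \<le> r" by simp
      then have ur: "U (q+r) \<in> D0" unfolding D0_def X_def by simp
      show False
      proof (cases "a = q+r")
        case True then show ?thesis using ur nbhdI2[of "U a" D0 E] aN by blast
      next
        case False
        define j where "j = a - q"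
        have j: "a = q+j" "1 \<le> j" "j \<le> r-1" using aV \<open>\<not> a \<le> q\<close> False unfolding j_def by linarith+
        have "{U (q+r), U (q+j)} \<in> E" using E6[of n k j] r2 j unfolding E_def q_def r_def by simp
        then show False using nbhdI[OF ur] aN j(1) by blast
      qed
    qed
    ultimately show ?thesis using aV by simp
  qed
  define T where "T = {2..k+1-p} \<union> {k+3+p+k mod 2..2*k+2}"
  have kp: "k = 2*p + k mod 2" unfolding p_def by simp
  have cardT: "card T = k"
  proof -
    have "{2..k+1-p} \<inter> {k+3+p+k mod 2..2*k+2} = {}" by auto
    then have "card T = card {2..k+1-p} + card {k+3+p+k mod 2..2*k+2}"
      unfolding T_def by (rule card_Un_disjoint[rotated 2]) auto
    also have "\<dots> = k" using kp k4 by simp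
    finally show ?thesis .
  qed
  have R2: "1 \<le> i \<and> i \<le> q \<and> x \<in> T" if w: "W i x \<in> Rem" for i x
  proof -
    have iV: "1 \<le> i" "i \<le> q" "1 \<le> x" "x \<le> 2*k+2" using w BV_W[of i x n k] unfolding Rem_def V_def q_def by auto
    have wN: "W i x \<notin> closed_nbhd E D0" using w unfolding Rem_def by blast
    have "x \<in> T"
    proof (rule ccontr)
      assume xT: "x \<notin> T"
      have Ck: "{k+2, x} \<in> Ck_edges k" if "x \<noteq> k+2" "x \<noteq> 1"
      proof -
        have "cadj (2*k+2) (k div 2) (k+2) x \<or> (odd k \<and> xadj k (k+2) x)"
        proof (cases "x \<le> k+2+p")
          case True
          then have "cadj (2*k+2) (k div 2) (k+2) x"
            using xT that iV unfolding cadj_def T_def p_def by auto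
          then show ?thesis by blast
        next
          case False
          then have "odd k" "x = k+3+p" using xT iV that kp unfolding T_def by auto
          moreover have "(k+1) div 2 = p+1" using \<open>odd k\<close> kp unfolding p_def by presburger
          ultimately have "xadj k (k+2) x" unfolding xadj_def Let_def by simp
          then show ?thesis using \<open>odd k\<close> by blast
        qed
        then show ?thesis using Ck_mem[of k "k+2" x] k4 by simp
      qed
      show False
      proof (cases "x = 1")
        case True
        then show False using E4[of i n k] iV nbhdI[OF inU[OF iV(1,2)]] wN unfolding E_def q_def by blast
      next
        case False
        show False
        proof (cases "x = k+2")
          case True then show False using inW[OF iV(1,2)] nbhdI2[of "W i x" D0 E] wN by blast
        next
          case F2: False
          have "{W i (k+2), W i x} \<in> E" using E2[of i n k] iV Ck[OF F2 False] unfolding E_def q_def by blast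
          then show False using nbhdI[OF inW[OF iV(1,2)]] wN by blast
        qed
      qed
    qed
    then show ?thesis using iV by blast
  qed
  have R3: "lab x = lab y" if xy: "x \<in> Rem" "y \<in> Rem" "{x,y} \<in> E" for x y
  proof -
    have notU: "U i \<notin> Rem" if "1 \<le> i" "i \<le> q" for i
      using inU[OF that] nbhdI2[of "U i" D0 E] unfolding Rem_def by blast
    from E7[OF xy(3)[unfolded E_def]] show ?thesis
      using notU xy(1,2) unfolding q_def[symmetric] lab_def by auto
  qed
  have nocyc: "\<not> has_cycle Rem E (k+1)"
  proof
    assume "has_cycle Rem E (k+1)"
    then obtain f where f: "inj_on f {..<k+1}" "f ` {..<k+1} \<subseteq> Rem"
      "\<forall>t<k+1. {f t, f (Suc t mod (k+1))} \<in> E" unfolding has_cycle_def by blast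
    have labc: "lab (f t) = lab (f 0)" if "t < k+1" for t
      using that
    proof (induction t)
      case 0 then show ?case by simp
    next
      case (Suc t)
      then have "Suc t mod (k+1) = Suc t" by simp
      then have "{f t, f (Suc t)} \<in> E" using f(3) Suc.prems by (metis Suc_lessD)
      moreover have "f t \<in> Rem" "f (Suc t) \<in> Rem" using f(2) Suc.prems by auto
      ultimately show ?case using R3 Suc by (metis Suc_lessD)
    qed
    have cardf: "card (f ` {..<k+1}) = k+1" using card_image[OF f(1)] by simp
    have f0: "f 0 \<in> Rem" using f(2) by auto
    show False
    proof (cases "f 0")
      case (U a)
      have rk: "r \<le> k+1" using R1[of a] f0 U by simp
      have "f ` {..<k+1} \<subseteq> U ` {q+2..q+r}"
      proof
        fix y assume "y \<in> f ` {..<k+1}"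
        then obtain t where t: "t < k+1" "y = f t" by blast
        have "lab y = 0" using labc[OF t(1)] U t(2) by (simp add: lab_def)
        then obtain b where b: "y = U b" unfolding lab_def by (cases y) auto
        have "y \<in> Rem" using f(2) t by blast
        then show "y \<in> U ` {q+2..q+r}" using R1 b by auto
      qed
      then have "card (f ` {..<k+1}) \<le> card (U ` {q+2..q+r})" by (rule card_mono[rotated]) simp
      also have "\<dots> \<le> card {q+2..q+r}" by (rule card_image_le) simp
      finally show False using cardf rk by simp
    next
      case (W i x)
      have "f ` {..<k+1} \<subseteq> W i ` T"
      proof
        fix y assume "y \<in> f ` {..<k+1}"
        then obtain t where t: "t < k+1" "y = f t" by blast
        have "lab y = Suc i" using labc[OF t(1)] W t(2) by (simp add: lab_def)
        then obtain b where b: "y = W i b" unfolding lab_def by (cases y) auto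
        have "y \<in> Rem" using f(2) t by blast
        then show "y \<in> W i ` T" using R2 b by auto
      qed
      then have "card (f ` {..<k+1}) \<le> card (W i ` T)" by (rule card_mono[rotated]) (simp add: T_def)
      also have "\<dots> \<le> card T" by (rule card_image_le) (simp add: T_def)
      finally show False using cardf cardT by simp
    qed
  qed
  have "isolating V E D0 (k+1)" unfolding isolating_def using DV nocyc unfolding Rem_def by blast
  then show ?thesis using cardD unfolding V_def E_def q_def r_def by blast
qed


lemma arith_target:
  fixes k n :: nat
  assumes "2*k+3 \<le> n"
  shows "(2*n) div (2*k+3) = 2 * (n div (2*k+3)) + (if k+2 \<le> n mod (2*k+3) then 1 else 0)"
proof -
  define m where "m = 2*k+3"
  define q where "q = n div m"
  define r where "r = n mod m"
  have n: "n = r + q*m" unfolding q_def r_def using div_mult_mod_eq[of n m] by linarith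
  have rm: "r < m" unfolding r_def m_def by simp
  have "2*n = 2*r + (2*q)*m" using n by simp
  then have "(2*n) div m = (2*r) div m + 2*q" using m_def by simp
  moreover have "(2*r) div m = (if k+2 \<le> r then 1 else 0)"
  proof (cases "k+2 \<le> r")
    case True
    then have "m \<le> 2*r" "2*r - m < m" using rm unfolding m_def by auto
    then have "(2*r) div m = Suc ((2*r - m) div m)" using le_div_geq[of m "2*r"] unfolding m_def by simp
    then show ?thesis using True \<open>2*r - m < m\<close> by simp
  next
    case False
    then have "2*r < m" unfolding m_def by simp
    then show ?thesis using False by simp
  qed
  ultimately show ?thesis unfolding m_def q_def r_def by simp
qed

theorem lemma4:
  fixes k n :: nat
  assumes "4 \<le> k" and "2*k+3 \<le> n"
  shows "iota (B_V n k) (B'_E n k) (k+1) = (2*n) div (2*k+3)"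
proof -
  define S where "S = {card D | D. isolating (B_V n k) (B'_E n k) D (k+1)}"
  define v where "v = 2 * (n div (2*k+3)) + (if k+2 \<le> n mod (2*k+3) then 1 else 0)"
  have fin: "finite S"
  proof (rule finite_subset)
    show "S \<subseteq> card ` Pow (B_V n k)" unfolding S_def isolating_def by auto
    show "finite (card ` Pow (B_V n k))" using BV_finite by simp
  qed
  have "Min S = v"
  proof (rule Min_eqI[OF fin])
    fix y assume "y \<in> S"
    then obtain D where D: "isolating (B_V n k) (B'_E n k) D (k+1)" "y = card D" unfolding S_def by blast
    show "v \<le> y" unfolding v_def D(2) by (rule lower[OF assms(1) D(1)])
  next
    obtain D where D: "isolating (B_V n k) (B'_E n k) D (k+1)" "card D = v" using upper[OF assms] unfolding v_def by blast
    then show "v \<in> S" unfolding S_def by (metis (mono_tags, lifting) mem_Collect_eq)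
  qed
  then show ?thesis unfolding iota_def S_def[symmetric] using arith_target[OF assms(2)] v_def by simp
qed


end
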